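(* Let $(G,\cdot,\odot,H,\circ,\boxdot,N,\star)$ be a two-sided bracoid (so $(N,\star)$ is abelian). Then for all $g\in G$, $h\in H$ and $\eta\in N$: (1) $\alpha(g)$ is an endomorphism of $(N,\star)$; (2) $\beta(h)$ is an endomorphism of $(N,\star)$; (3) $({}^{\gamma(g)}\eta)^{\delta(h)}={}^{\gamma(g)}(\eta^{\delta(h)})$; (4) $({}^{\alpha(g)}\eta)^{\beta(h)}={}^{\alpha(g)}(\eta^{\beta(h)})$.
   Context: For a group $(N,\star)$, $e_N$ denotes its identity and $\overline{\eta}$ the inverse of $\eta$. A left skew bracoid is $(G,\cdot,N,\star,\odot)$ with $(G,\cdot),(N,\star)$ groups and $\odot$ a transitive left action of $G$ on $N$ with $g\odot(\mu\star\eta)=(g\odot\mu)\star\overline{(g\odot e_N)}\star(g\odot\eta)$ for all $g\in G$, $\mu,\eta\in N$. A right skew bracoid is $(H,\circ,N,\star,\boxdot)$ with $(H,\circ),(N,\star)$ groups and $\boxdot$ a transitive right action of $H$ on $N$ with $(\eta\star\mu)\boxdot h=(\eta\boxdot h)\star\overline{(e_N\boxdot h)}\star(\mu\boxdot h)$ for all $h\in H$, $\eta,\mu\in N$. A two-sided skew bracoid $(G,\cdot,\odot,H,\circ,\boxdot,N,\star)$ consists of a left skew bracoid $(G,\cdot,N,\star,\odot)$ and a right skew bracoid $(H,\circ,N,\star,\boxdot)$ on the same group $(N,\star)$ such that $g\odot(\eta\boxdot h)=(g\odot\eta)\boxdot h$ for all $g\in G,h\in H,\eta\in N$; it is a two-sided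 bracoid if $(N,\star)$ is abelian. Define, for $g\in G$, $h\in H$, $\eta\in N$: ${}^{\gamma(g)}\eta=\overline{(g\odot e_N)}\star(g\odot\eta)$; ${}^{\alpha(g)}\eta=\overline{(g\odot e_N)}\star(g\odot\eta)\star\overline{\eta}$; $\eta^{\delta(h)}=(\eta\boxdot h)\star\overline{(e_N\boxdot h)}$; $\eta^{\beta(h)}=\overline{\eta}\star(\eta\boxdot h)\star\overline{(e_N\boxdot h)}$. *)

theory Defs
  imports "HOL-Algebra.Group"
begin

definition left_action :: "('g,'a) monoid_scheme \<Rightarrow> ('n,'b) monoid_scheme \<Rightarrow> ('g \<Rightarrow> 'n \<Rightarrow> 'n) \<Rightarrow> bool" where
  "left_action G N act \<longleftrightarrow>
     (\<forall>g\<in>carrier G. \<forall>x\<in>carrier N. act g x \<in> carrier N) \<and>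
     (\<forall>x\<in>carrier N. act \<one>\<^bsub>G\<^esub> x = x) \<and>
     (\<forall>g\<in>carrier G. \<forall>k\<in>carrier G. \<forall>x\<in>carrier N. act (g \<otimes>\<^bsub>G\<^esub> k) x = act g (act k x))"

definition right_action :: "('h,'a) monoid_scheme \<Rightarrow> ('n,'b) monoid_scheme \<Rightarrow> ('n \<Rightarrow> 'h \<Rightarrow> 'n) \<Rightarrow> bool" where
  "right_action H N act \<longleftrightarrow>
     (\<forall>h\<in>carrier H. \<forall>x\<in>carrier N. act x h \<in> carrier N) \<and>
     (\<forall>x\<in>carrier N. act x \<one>\<^bsub>H\<^esub> = x) \<and>
     (\<forall>h\<in>carrier H. \<forall>k\<in>carrier H. \<forall>x\<in>carrier N. act x (h \<otimes>\<^bsub>H\<^esub> k) = act (act x h) k)"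

definition left_transitive :: "('g,'a) monoid_scheme \<Rightarrow> ('n,'b) monoid_scheme \<Rightarrow> ('g \<Rightarrow> 'n \<Rightarrow> 'n) \<Rightarrow> bool" where
  "left_transitive G N act \<longleftrightarrow> (\<forall>x\<in>carrier N. \<forall>y\<in>carrier N. \<exists>g\<in>carrier G. act g x = y)"

definition right_transitive :: "('h,'a) monoid_scheme \<Rightarrow> ('n,'b) monoid_scheme \<Rightarrow> ('n \<Rightarrow> 'h \<Rightarrow> 'n) \<Rightarrow> bool" where
  "right_transitive H N act \<longleftrightarrow> (\<forall>x\<in>carrier N. \<forall>y\<in>carrier N. \<exists>h\<in>carrier H. act x h = y)"

definition left_skew_bracoid :: "('g,'a) monoid_scheme \<Rightarrow> ('n,'b) monoid_scheme \<Rightarrow> ('g \<Rightarrow> 'n \<Rightarrow> 'n) \<Rightarrow> bool" where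
  "left_skew_bracoid G N act \<longleftrightarrow> group G \<and> group N \<and> left_action G N act \<and> left_transitive G N act \<and>
     (\<forall>g\<in>carrier G. \<forall>\<mu>\<in>carrier N. \<forall>\<eta>\<in>carrier N.
        act g (\<mu> \<otimes>\<^bsub>N\<^esub> \<eta>) = act g \<mu> \<otimes>\<^bsub>N\<^esub> inv\<^bsub>N\<^esub> (act g \<one>\<^bsub>N\<^esub>) \<otimes>\<^bsub>N\<^esub> act g \<eta>)"

definition right_skew_bracoid :: "('h,'a) monoid_scheme \<Rightarrow> ('n,'b) monoid_scheme \<Rightarrow> ('n \<Rightarrow> 'h \<Rightarrow> 'n) \<Rightarrow> bool" where
  "right_skew_bracoid H N act \<longleftrightarrow> group H \<and> group N \<and> right_action H N act \<and> right_transitive H N act \<and>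
     (\<forall>h\<in>carrier H. \<forall>\<eta>\<in>carrier N. \<forall>\<mu>\<in>carrier N.
        act (\<eta> \<otimes>\<^bsub>N\<^esub> \<mu>) h = act \<eta> h \<otimes>\<^bsub>N\<^esub> inv\<^bsub>N\<^esub> (act \<one>\<^bsub>N\<^esub> h) \<otimes>\<^bsub>N\<^esub> act \<mu> h)"

definition two_sided_skew_bracoid ::
  "('g,'a) monoid_scheme \<Rightarrow> ('g \<Rightarrow> 'n \<Rightarrow> 'n) \<Rightarrow> ('h,'c) monoid_scheme \<Rightarrow> ('n \<Rightarrow> 'h \<Rightarrow> 'n)
    \<Rightarrow> ('n,'b) monoid_scheme \<Rightarrow> bool" where
  "two_sided_skew_bracoid G lact H ract N \<longleftrightarrow>
     left_skew_bracoid G N lact \<and> right_skew_bracoid H N ract \<and>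
     (\<forall>g\<in>carrier G. \<forall>h\<in>carrier H. \<forall>\<eta>\<in>carrier N. lact g (ract \<eta> h) = ract (lact g \<eta>) h)"

definition two_sided_bracoid ::
  "('g,'a) monoid_scheme \<Rightarrow> ('g \<Rightarrow> 'n \<Rightarrow> 'n) \<Rightarrow> ('h,'c) monoid_scheme \<Rightarrow> ('n \<Rightarrow> 'h \<Rightarrow> 'n)
    \<Rightarrow> ('n,'b) monoid_scheme \<Rightarrow> bool" where
  "two_sided_bracoid G lact H ract N \<longleftrightarrow> two_sided_skew_bracoid G lact H ract N \<and> comm_group N"

definition bgamma :: "('n,'b) monoid_scheme \<Rightarrow> ('g \<Rightarrow> 'n \<Rightarrow> 'n) \<Rightarrow> 'g \<Rightarrow> 'n \<Rightarrow> 'n" where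
  "bgamma N lact g \<eta> = inv\<^bsub>N\<^esub> (lact g \<one>\<^bsub>N\<^esub>) \<otimes>\<^bsub>N\<^esub> lact g \<eta>"

definition balpha :: "('n,'b) monoid_scheme \<Rightarrow> ('g \<Rightarrow> 'n \<Rightarrow> 'n) \<Rightarrow> 'g \<Rightarrow> 'n \<Rightarrow> 'n" where
  "balpha N lact g \<eta> = inv\<^bsub>N\<^esub> (lact g \<one>\<^bsub>N\<^esub>) \<otimes>\<^bsub>N\<^esub> lact g \<eta> \<otimes>\<^bsub>N\<^esub> inv\<^bsub>N\<^esub> \<eta>"

definition bdelta :: "('n,'b) monoid_scheme \<Rightarrow> ('n \<Rightarrow> 'h \<Rightarrow> 'n) \<Rightarrow> 'h \<Rightarrow> 'n \<Rightarrow> 'n" where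
  "bdelta N ract h \<eta> = ract \<eta> h \<otimes>\<^bsub>N\<^esub> inv\<^bsub>N\<^esub> (ract \<one>\<^bsub>N\<^esub> h)"

definition bbeta :: "('n,'b) monoid_scheme \<Rightarrow> ('n \<Rightarrow> 'h \<Rightarrow> 'n) \<Rightarrow> 'h \<Rightarrow> 'n \<Rightarrow> 'n" where
  "bbeta N ract h \<eta> = inv\<^bsub>N\<^esub> \<eta> \<otimes>\<^bsub>N\<^esub> ract \<eta> h \<otimes>\<^bsub>N\<^esub> inv\<^bsub>N\<^esub> (ract \<one>\<^bsub>N\<^esub> h)"

end

theory Submission
  imports Defs
begin

context comm_group begin
lemma cancel1: "x \<in> carrier G \<Longrightarrow> y \<in> carrier G \<Longrightarrow> x \<otimes> (inv x \<otimes> y) = y"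
  by (simp add: m_assoc[symmetric])
lemma cancel2: "x \<in> carrier G \<Longrightarrow> y \<in> carrier G \<Longrightarrow> inv x \<otimes> (x \<otimes> y) = y"
  by (simp add: m_assoc[symmetric])
lemma canc_0_a_t: assumes "x \<in> carrier G" "t \<in> carrier G" shows "x \<otimes> (inv x \<otimes> (t)) = t"
  using assms by (simp only:  cancel1 inv_closed m_closed)
lemma canc_0_b_t: assumes "x \<in> carrier G" "t \<in> carrier G" shows "inv x \<otimes> (x \<otimes> (t)) = t"
  using assms by (simp only:  cancel2 inv_closed m_closed)
lemma canc_1_a_t: assumes "x \<in> carrier G" "y0 \<in> carrier G" "t \<in> carrier G" shows "x \<otimes> (y0 \<otimes> (inv x \<otimes> (t))) = y0 \<otimes> (t)"
  using assms by (simp only: m_lcomm[of y0 "inv x"] cancel1 inv_closed m_closed)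
lemma canc_1_a_n: assumes "x \<in> carrier G" "y0 \<in> carrier G" shows "x \<otimes> (y0 \<otimes> (inv x)) = y0"
  using assms by (simp only: m_comm[of y0 "inv x"] cancel1 inv_closed m_closed)
lemma canc_1_b_t: assumes "x \<in> carrier G" "y0 \<in> carrier G" "t \<in> carrier G" shows "inv x \<otimes> (y0 \<otimes> (x \<otimes> (t))) = y0 \<otimes> (t)"
  using assms by (simp only: m_lcomm[of y0 "x"] cancel2 inv_closed m_closed)
lemma canc_1_b_n: assumes "x \<in> carrier G" "y0 \<in> carrier G" shows "inv x \<otimes> (y0 \<otimes> (x)) = y0"
  using assms by (simp only: m_comm[of y0 "x"] cancel2 inv_closed m_closed)
lemma canc_2_a_t: assumes "x \<in> carrier G" "y0 \<in> carrier G" "y1 \<in> carrier G" "t \<in> carrier G" shows "x \<otimes> (y0 \<otimes> (y1 \<otimes> (inv x \<otimes> (t)))) = y0 \<otimes> (y1 \<otimes> (t))"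
  using assms by (simp only: m_lcomm[of y0 "inv x"] m_lcomm[of y1 "inv x"] cancel1 inv_closed m_closed)
lemma canc_2_a_n: assumes "x \<in> carrier G" "y0 \<in> carrier G" "y1 \<in> carrier G" shows "x \<otimes> (y0 \<otimes> (y1 \<otimes> (inv x))) = y0 \<otimes> (y1)"
  using assms by (simp only: m_comm[of y1 "inv x"] m_lcomm[of y0 "inv x"] cancel1 inv_closed m_closed)
lemma canc_2_b_t: assumes "x \<in> carrier G" "y0 \<in> carrier G" "y1 \<in> carrier G" "t \<in> carrier G" shows "inv x \<otimes> (y0 \<otimes> (y1 \<otimes> (x \<otimes> (t)))) = y0 \<otimes> (y1 \<otimes> (t))"
  using assms by (simp only: m_lcomm[of y0 "x"] m_lcomm[of y1 "x"] cancel2 inv_closed m_closed)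
lemma canc_2_b_n: assumes "x \<in> carrier G" "y0 \<in> carrier G" "y1 \<in> carrier G" shows "inv x \<otimes> (y0 \<otimes> (y1 \<otimes> (x))) = y0 \<otimes> (y1)"
  using assms by (simp only: m_comm[of y1 "x"] m_lcomm[of y0 "x"] cancel2 inv_closed m_closed)
lemma canc_3_a_t: assumes "x \<in> carrier G" "y0 \<in> carrier G" "y1 \<in> carrier G" "y2 \<in> carrier G" "t \<in> carrier G" shows "x \<otimes> (y0 \<otimes> (y1 \<otimes> (y2 \<otimes> (inv x \<otimes> (t))))) = y0 \<otimes> (y1 \<otimes> (y2 \<otimes> (t)))"
  using assms by (simp only: m_lcomm[of y0 "inv x"] m_lcomm[of y1 "inv x"] m_lcomm[of y2 "inv x"] cancel1 inv_closed m_closed)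
lemma canc_3_a_n: assumes "x \<in> carrier G" "y0 \<in> carrier G" "y1 \<in> carrier G" "y2 \<in> carrier G" shows "x \<otimes> (y0 \<otimes> (y1 \<otimes> (y2 \<otimes> (inv x)))) = y0 \<otimes> (y1 \<otimes> (y2))"
  using assms by (simp only: m_comm[of y2 "inv x"] m_lcomm[of y0 "inv x"] m_lcomm[of y1 "inv x"] cancel1 inv_closed m_closed)
lemma canc_3_b_t: assumes "x \<in> carrier G" "y0 \<in> carrier G" "y1 \<in> carrier G" "y2 \<in> carrier G" "t \<in> carrier G" shows "inv x \<otimes> (y0 \<otimes> (y1 \<otimes> (y2 \<otimes> (x \<otimes> (t))))) = y0 \<otimes> (y1 \<otimes> (y2 \<otimes> (t)))"
  using assms by (simp only: m_lcomm[of y0 "x"] m_lcomm[of y1 "x"] m_lcomm[of y2 "x"] cancel2 inv_closed m_closed)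
lemma canc_3_b_n: assumes "x \<in> carrier G" "y0 \<in> carrier G" "y1 \<in> carrier G" "y2 \<in> carrier G" shows "inv x \<otimes> (y0 \<otimes> (y1 \<otimes> (y2 \<otimes> (x)))) = y0 \<otimes> (y1 \<otimes> (y2))"
  using assms by (simp only: m_comm[of y2 "x"] m_lcomm[of y0 "x"] m_lcomm[of y1 "x"] cancel2 inv_closed m_closed)
lemma canc_4_a_t: assumes "x \<in> carrier G" "y0 \<in> carrier G" "y1 \<in> carrier G" "y2 \<in> carrier G" "y3 \<in> carrier G" "t \<in> carrier G" shows "x \<otimes> (y0 \<otimes> (y1 \<otimes> (y2 \<otimes> (y3 \<otimes> (inv x \<otimes> (t)))))) = y0 \<otimes> (y1 \<otimes> (y2 \<otimes> (y3 \<otimes> (t))))"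
  using assms by (simp only: m_lcomm[of y0 "inv x"] m_lcomm[of y1 "inv x"] m_lcomm[of y2 "inv x"] m_lcomm[of y3 "inv x"] cancel1 inv_closed m_closed)
lemma canc_4_a_n: assumes "x \<in> carrier G" "y0 \<in> carrier G" "y1 \<in> carrier G" "y2 \<in> carrier G" "y3 \<in> carrier G" shows "x \<otimes> (y0 \<otimes> (y1 \<otimes> (y2 \<otimes> (y3 \<otimes> (inv x))))) = y0 \<otimes> (y1 \<otimes> (y2 \<otimes> (y3)))"
  using assms by (simp only: m_comm[of y3 "inv x"] m_lcomm[of y0 "inv x"] m_lcomm[of y1 "inv x"] m_lcomm[of y2 "inv x"] cancel1 inv_closed m_closed)
lemma canc_4_b_t: assumes "x \<in> carrier G" "y0 \<in> carrier G" "y1 \<in> carrier G" "y2 \<in> carrier G" "y3 \<in> carrier G" "t \<in> carrier G" shows "inv x \<otimes> (y0 \<otimes> (y1 \<otimes> (y2 \<otimes> (y3 \<otimes> (x \<otimes> (t)))))) = y0 \<otimes> (y1 \<otimes> (y2 \<otimes> (y3 \<otimes> (t))))"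
  using assms by (simp only: m_lcomm[of y0 "x"] m_lcomm[of y1 "x"] m_lcomm[of y2 "x"] m_lcomm[of y3 "x"] cancel2 inv_closed m_closed)
lemma canc_4_b_n: assumes "x \<in> carrier G" "y0 \<in> carrier G" "y1 \<in> carrier G" "y2 \<in> carrier G" "y3 \<in> carrier G" shows "inv x \<otimes> (y0 \<otimes> (y1 \<otimes> (y2 \<otimes> (y3 \<otimes> (x))))) = y0 \<otimes> (y1 \<otimes> (y2 \<otimes> (y3)))"
  using assms by (simp only: m_comm[of y3 "x"] m_lcomm[of y0 "x"] m_lcomm[of y1 "x"] m_lcomm[of y2 "x"] cancel2 inv_closed m_closed)
lemmas canc = canc_0_a_t canc_0_b_t canc_1_a_t canc_1_a_n canc_1_b_t canc_1_b_n canc_2_a_t canc_2_a_n canc_2_b_t canc_2_b_n canc_3_a_t canc_3_a_n canc_3_b_t canc_3_b_n canc_4_a_t canc_4_a_n canc_4_b_t canc_4_b_n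

lemma gam_hom:
  assumes cl: "\<And>x. x \<in> carrier G \<Longrightarrow> L x \<in> carrier G"
    and af: "\<And>x y. x \<in> carrier G \<Longrightarrow> y \<in> carrier G \<Longrightarrow> L (x \<otimes> y) = L x \<otimes> inv (L \<one>) \<otimes> L y"
  shows "(\<lambda>x. inv (L \<one>) \<otimes> L x) \<in> hom G G"
proof (rule homI)
  fix x y assume x: "x \<in> carrier G" and y: "y \<in> carrier G"
  have c1: "L \<one> \<in> carrier G" using cl by simp
  show "inv L \<one> \<otimes> L (x \<otimes> y) = inv L \<one> \<otimes> L x \<otimes> (inv L \<one> \<otimes> L y)"
    using x y c1 cl af by (simp add: m_ac)
qed (use cl in simp)

lemma alp_hom:
  assumes cl: "\<And>x. x \<in> carrier G \<Longrightarrow> L x \<in> carrier G"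
    and af: "\<And>x y. x \<in> carrier G \<Longrightarrow> y \<in> carrier G \<Longrightarrow> L (x \<otimes> y) = L x \<otimes> inv (L \<one>) \<otimes> L y"
  shows "(\<lambda>x. inv (L \<one>) \<otimes> L x \<otimes> inv x) \<in> hom G G"
proof (rule homI)
  fix x y assume x: "x \<in> carrier G" and y: "y \<in> carrier G"
  have c1: "L \<one> \<in> carrier G" using cl by simp
  show "inv L \<one> \<otimes> L (x \<otimes> y) \<otimes> inv (x \<otimes> y) = inv L \<one> \<otimes> L x \<otimes> inv x \<otimes> (inv L \<one> \<otimes> L y \<otimes> inv y)"
    using x y c1 cl af by (simp add: m_ac inv_mult)
qed (use cl in simp)

lemma del_hom:
  assumes cl: "\<And>x. x \<in> carrier G \<Longrightarrow> R x \<in> carrier G"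
    and af: "\<And>x y. x \<in> carrier G \<Longrightarrow> y \<in> carrier G \<Longrightarrow> R (x \<otimes> y) = R x \<otimes> inv (R \<one>) \<otimes> R y"
  shows "(\<lambda>x. R x \<otimes> inv (R \<one>)) \<in> hom G G"
proof (rule homI)
  fix x y assume x: "x \<in> carrier G" and y: "y \<in> carrier G"
  have c1: "R \<one> \<in> carrier G" using cl by simp
  show "R (x \<otimes> y) \<otimes> inv R \<one> = R x \<otimes> inv R \<one> \<otimes> (R y \<otimes> inv R \<one>)"
    using x y c1 cl af by (simp add: m_ac)
qed (use cl in simp)

lemma bet_hom:
  assumes cl: "\<And>x. x \<in> carrier G \<Longrightarrow> R x \<in> carrier G"
    and af: "\<And>x y. x \<in> carrier G \<Longrightarrow> y \<in> carrier G \<Longrightarrow> R (x \<otimes> y) = R x \<otimes> inv (R \<one>) \<otimes> R y"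
  shows "(\<lambda>x. inv x \<otimes> R x \<otimes> inv (R \<one>)) \<in> hom G G"
proof (rule homI)
  fix x y assume x: "x \<in> carrier G" and y: "y \<in> carrier G"
  have c1: "R \<one> \<in> carrier G" using cl by simp
  show "inv (x \<otimes> y) \<otimes> R (x \<otimes> y) \<otimes> inv R \<one> = inv x \<otimes> R x \<otimes> inv R \<one> \<otimes> (inv y \<otimes> R y \<otimes> inv R \<one>)"
    using x y c1 cl af by (simp add: m_ac inv_mult)
qed (use cl in simp)

lemma part3:
  assumes clL: "\<And>x. x \<in> carrier G \<Longrightarrow> L x \<in> carrier G"
    and afL: "\<And>x y. x \<in> carrier G \<Longrightarrow> y \<in> carrier G \<Longrightarrow> L (x \<otimes> y) = L x \<otimes> inv (L \<one>) \<otimes> L y"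
    and clR: "\<And>x. x \<in> carrier G \<Longrightarrow> R x \<in> carrier G"
    and afR: "\<And>x y. x \<in> carrier G \<Longrightarrow> y \<in> carrier G \<Longrightarrow> R (x \<otimes> y) = R x \<otimes> inv (R \<one>) \<otimes> R y"
    and com: "\<And>x. x \<in> carrier G \<Longrightarrow> L (R x) = R (L x)"
    and e: "e \<in> carrier G"
  shows "R (inv (L \<one>) \<otimes> L e) \<otimes> inv (R \<one>) = inv (L \<one>) \<otimes> L (R e \<otimes> inv (R \<one>))"
proof -
  interpret gg: group_hom G G "\<lambda>x. inv (L \<one>) \<otimes> L x"
    using gam_hom[OF clL afL] by unfold_locales
  interpret dd: group_hom G G "\<lambda>x. R x \<otimes> inv (R \<one>)"
    using del_hom[OF clR afR] by unfold_locales
  have a: "L \<one> \<in> carrier G" "R \<one> \<in> carrier G" using clL clR by auto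
  have "R (inv (L \<one>) \<otimes> L e) \<otimes> inv (R \<one>) = inv (R (L \<one>) \<otimes> inv (R \<one>)) \<otimes> (R (L e) \<otimes> inv (R \<one>))"
    using dd.hom_mult[of "inv (L \<one>)" "L e"] dd.hom_inv[of "L \<one>"] a e clL by simp
  also have "\<dots> = inv (L (R \<one>) \<otimes> inv (R \<one>)) \<otimes> (L (R e) \<otimes> inv (R \<one>))"
    using com a e by simp
  also have "\<dots> = (inv (L \<one>) \<otimes> L (R e)) \<otimes> inv (inv (L \<one>) \<otimes> L (R \<one>))"
    using a e clL clR by (simp add: inv_mult m_ac canc)
  also have "\<dots> = inv (L \<one>) \<otimes> L (R e \<otimes> inv (R \<one>))"
    using gg.hom_mult[of "R e" "inv (R \<one>)"] gg.hom_inv[of "R \<one>"] a e clR by simp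
  finally show ?thesis .
qed

lemma part4:
  assumes gh: "gam \<in> hom G G" and dh: "del \<in> hom G G"
    and com: "del (gam e) = gam (del e)" and e: "e \<in> carrier G"
  shows "inv (gam e \<otimes> inv e) \<otimes> del (gam e \<otimes> inv e) = gam (inv e \<otimes> del e) \<otimes> inv (inv e \<otimes> del e)"
proof -
  interpret gg: group_hom G G gam using gh by unfold_locales
  interpret dd: group_hom G G del using dh by unfold_locales
  have c: "gam e \<in> carrier G" "del e \<in> carrier G" "gam (del e) \<in> carrier G" using e by auto
  have "inv (gam e \<otimes> inv e) \<otimes> del (gam e \<otimes> inv e) = inv (gam e \<otimes> inv e) \<otimes> (gam (del e) \<otimes> inv (del e))"
    using e c com by simp
  also have "\<dots> = inv (gam e) \<otimes> gam (del e) \<otimes> inv (inv e \<otimes> del e)"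
    using e c by (simp add: inv_mult m_ac canc)
  also have "\<dots> = gam (inv e \<otimes> del e) \<otimes> inv (inv e \<otimes> del e)"
    using e c by simp
  finally show ?thesis .
qed
end

theorem theorem3p3:
  fixes G :: "('g,'a) monoid_scheme" and H :: "('h,'c) monoid_scheme" and N :: "('n,'b) monoid_scheme"
    and lact :: "'g \<Rightarrow> 'n \<Rightarrow> 'n" and ract :: "'n \<Rightarrow> 'h \<Rightarrow> 'n"
  assumes "two_sided_bracoid G lact H ract N"
    and "g \<in> carrier G" and "h \<in> carrier H" and "\<eta> \<in> carrier N"
  shows "balpha N lact g \<in> hom N N
    \<and> bbeta N ract h \<in> hom N N
    \<and> bdelta N ract h (bgamma N lact g \<eta>) = bgamma N lact g (bdelta N ract h \<eta>)
    \<and> bbeta N ract h (balpha N lact g \<eta>) = balpha N lact g (bbeta N ract h \<eta>)"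
proof -
  note A = assms(1)[unfolded two_sided_bracoid_def two_sided_skew_bracoid_def
      left_skew_bracoid_def right_skew_bracoid_def left_action_def right_action_def]
  interpret N: comm_group N using A by blast
  have clL: "\<And>x. x \<in> carrier N \<Longrightarrow> lact g x \<in> carrier N" using A assms(2) by auto
  have afL: "\<And>x y. x \<in> carrier N \<Longrightarrow> y \<in> carrier N \<Longrightarrow>
     lact g (x \<otimes>\<^bsub>N\<^esub> y) = lact g x \<otimes>\<^bsub>N\<^esub> inv\<^bsub>N\<^esub> (lact g \<one>\<^bsub>N\<^esub>) \<otimes>\<^bsub>N\<^esub> lact g y"
    using A assms(2) by auto
  have clR: "\<And>x. x \<in> carrier N \<Longrightarrow> ract x h \<in> carrier N" using A assms(3) by auto
  have afR: "\<And>x y. x \<in> carrier N \<Longrightarrow> y \<in> carrier N \<Longrightarrow>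
     ract (x \<otimes>\<^bsub>N\<^esub> y) h = ract x h \<otimes>\<^bsub>N\<^esub> inv\<^bsub>N\<^esub> (ract \<one>\<^bsub>N\<^esub> h) \<otimes>\<^bsub>N\<^esub> ract y h"
    using A assms(3) by auto
  have com: "\<And>x. x \<in> carrier N \<Longrightarrow> lact g (ract x h) = ract (lact g x) h"
    using A assms(2,3) by auto
  have ga: "bgamma N lact g = (\<lambda>x. inv\<^bsub>N\<^esub> (lact g \<one>\<^bsub>N\<^esub>) \<otimes>\<^bsub>N\<^esub> lact g x)"
    by (rule ext) (simp add: bgamma_def)
  have de: "bdelta N ract h = (\<lambda>x. ract x h \<otimes>\<^bsub>N\<^esub> inv\<^bsub>N\<^esub> (ract \<one>\<^bsub>N\<^esub> h))"
    by (rule ext) (simp add: bdelta_def)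
  have al: "balpha N lact g = (\<lambda>x. inv\<^bsub>N\<^esub> (lact g \<one>\<^bsub>N\<^esub>) \<otimes>\<^bsub>N\<^esub> lact g x \<otimes>\<^bsub>N\<^esub> inv\<^bsub>N\<^esub> x)"
    by (rule ext) (simp add: balpha_def)
  have be: "bbeta N ract h = (\<lambda>x. inv\<^bsub>N\<^esub> x \<otimes>\<^bsub>N\<^esub> ract x h \<otimes>\<^bsub>N\<^esub> inv\<^bsub>N\<^esub> (ract \<one>\<^bsub>N\<^esub> h))"
    by (rule ext) (simp add: bbeta_def)
  have gh: "bgamma N lact g \<in> hom N N" unfolding ga
    by (rule N.gam_hom[of "lact g"]) (use clL afL in auto)
  have dh: "bdelta N ract h \<in> hom N N" unfolding de
    by (rule N.del_hom[of "\<lambda>x. ract x h"]) (use clR afR in auto)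
  have ah: "balpha N lact g \<in> hom N N" unfolding al
    by (rule N.alp_hom[of "lact g"]) (use clL afL in auto)
  have bh: "bbeta N ract h \<in> hom N N" unfolding be
    by (rule N.bet_hom[of "\<lambda>x. ract x h"]) (use clR afR in auto)
  have p3: "\<And>e. e \<in> carrier N \<Longrightarrow> bdelta N ract h (bgamma N lact g e) = bgamma N lact g (bdelta N ract h e)"
    unfolding ga de
    by (rule N.part3[of "lact g" "\<lambda>x. ract x h"]) (use clL afL clR afR com in auto)
  have al2: "\<And>x. x \<in> carrier N \<Longrightarrow> balpha N lact g x = bgamma N lact g x \<otimes>\<^bsub>N\<^esub> inv\<^bsub>N\<^esub> x"
    by (simp add: balpha_def bgamma_def)
  have be2: "\<And>x. x \<in> carrier N \<Longrightarrow> bbeta N ract h x = inv\<^bsub>N\<^esub> x \<otimes>\<^bsub>N\<^esub> bdelta N ract h x"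
    using clR by (simp add: bbeta_def bdelta_def N.m_assoc)
  have p4: "bbeta N ract h (balpha N lact g \<eta>) = balpha N lact g (bbeta N ract h \<eta>)"
  proof -
    have c: "balpha N lact g \<eta> \<in> carrier N" "bbeta N ract h \<eta> \<in> carrier N"
      using ah bh assms(4) by (auto simp: hom_def)
    show ?thesis
      using N.part4[OF gh dh p3[OF assms(4)] assms(4)] al2 be2 c assms(4) by simp
  qed
  show ?thesis using ah bh p3 assms(4) p4 by blast
qed

end
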